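(* Let $f,g\in\mathcal F^{\,r}_{op}$ and suppose $\tilde g(x)\le\tilde f(x)$ for all $x>0$. Then for every $n$, every faithful $\rho\in\mathcal D_n^1$ and every self-adjoint $A\in M_n(\mathbb C)$, $$I^f_\rho(A)\le I^g_\rho(A).$$
   Context: $\mathcal F_{op}$ is the class of functions $f:(0,\infty)\to(0,\infty)$ that are operator monotone, satisfy $f(1)=1$ and $tf(t^{-1})=f(t)$ for all $t>0$. $f(0):=\lim_{x\to0^+}f(x)$, and $\mathcal F^{\,r}_{op}=\{f\in\mathcal F_{op}: f(0)\neq0\}$. For $f\in\mathcal F^{\,r}_{op}$ and $x>0$, $\tilde f(x):=\frac12\big[(x+1)-(x-1)^2\frac{f(0)}{f(x)}\big]$. $\mathcal D_n^1$ is the set of strictly positive $n\times n$ density matrices. For $x,y>0$, $m_f(x,y)=xf(y/x)$; $L_\rho(X)=\rho X$, $R_\rho(X)=X\rho$, and $m_f(L_\rho,R_\rho)$ multiplies the entry $X_{ij}$ of $X$ (in an orthonormal eigenbasis of $\rho$ with eigenvalues $\lambda_i$) by $m_f(\lambda_i,\lambda_j)$. $\|X\|^2_{\rho,f}=\mathrm{Tr}\big(X^* m_f(L_\rho,R_\rho)^{-1}(X)\big)$. The $f$-information is $I^f_\rho(A)=\frac{f(0)}{2}\|i[\rho,A]\|^2_{\rho,f}$. *)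

theory Defs
  imports "HOL-Analysis.Analysis" "Jordan_Normal_Form.Matrix"
begin

definition adj :: "complex mat \<Rightarrow> complex mat" where
  "adj M = mat (dim_col M) (dim_row M) (\<lambda>(i,j). cnj (M $$ (j,i)))"

definition hermitian_mat :: "nat \<Rightarrow> complex mat \<Rightarrow> bool" where
  "hermitian_mat n A \<longleftrightarrow> A \<in> carrier_mat n n \<and> adj A = A"

definition unitary_mat :: "nat \<Rightarrow> complex mat \<Rightarrow> bool" where
  "unitary_mat n U \<longleftrightarrow> U \<in> carrier_mat n n \<and> adj U * U = 1\<^sub>m n"

definition rdiag :: "nat \<Rightarrow> (nat \<Rightarrow> real) \<Rightarrow> complex mat" where
  "rdiag n d = mat n n (\<lambda>(i,j). if i = j then complex_of_real (d i) else 0)"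

definition herm_decomp :: "nat \<Rightarrow> complex mat \<Rightarrow> complex mat \<Rightarrow> (nat \<Rightarrow> real) \<Rightarrow> bool" where
  "herm_decomp n A U d \<longleftrightarrow> unitary_mat n U \<and> A = U * rdiag n d * adj U"

text \<open>Functional calculus f(A) for Hermitian A (independent of the chosen diagonalisation).\<close>
definition mat_fun :: "nat \<Rightarrow> (real \<Rightarrow> real) \<Rightarrow> complex mat \<Rightarrow> complex mat" where
  "mat_fun n f A = (SOME B. \<exists>U d. herm_decomp n A U d \<and> B = U * rdiag n (f \<circ> d) * adj U)"

definition quad_form :: "nat \<Rightarrow> complex mat \<Rightarrow> complex vec \<Rightarrow> complex" where
  "quad_form n M v = (\<Sum>i<n. \<Sum>j<n. cnj (v $ i) * M $$ (i,j) * v $ j)"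

definition pos_def_mat :: "nat \<Rightarrow> complex mat \<Rightarrow> bool" where
  "pos_def_mat n A \<longleftrightarrow> hermitian_mat n A \<and>
     (\<forall>v \<in> carrier_vec n. v \<noteq> 0\<^sub>v n \<longrightarrow> Re (quad_form n A v) > 0)"

definition loewner_le :: "nat \<Rightarrow> complex mat \<Rightarrow> complex mat \<Rightarrow> bool" where
  "loewner_le n A B \<longleftrightarrow> hermitian_mat n A \<and> hermitian_mat n B \<and>
     (\<forall>v \<in> carrier_vec n. Re (quad_form n (B - A) v) \<ge> 0)"

definition operator_monotone :: "(real \<Rightarrow> real) \<Rightarrow> bool" where
  "operator_monotone f \<longleftrightarrow> (\<forall>n A B. pos_def_mat n A \<and> pos_def_mat n B \<and> loewner_le n A B
       \<longrightarrow> loewner_le n (mat_fun n f A) (mat_fun n f B))"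

definition F_op :: "(real \<Rightarrow> real) \<Rightarrow> bool" where
  "F_op f \<longleftrightarrow> (\<forall>x>0. f x > 0) \<and> operator_monotone f \<and> f 1 = 1 \<and>
     (\<forall>t>0. t * f (1 / t) = f t)"

definition f0 :: "(real \<Rightarrow> real) \<Rightarrow> real" where
  "f0 f = Lim (at_right 0) f"

definition F_op_r :: "(real \<Rightarrow> real) \<Rightarrow> bool" where
  "F_op_r f \<longleftrightarrow> F_op f \<and> f0 f \<noteq> 0"

definition tilde :: "(real \<Rightarrow> real) \<Rightarrow> real \<Rightarrow> real" where
  "tilde f x = ((x + 1) - (x - 1)^2 * (f0 f / f x)) / 2"

definition mf :: "(real \<Rightarrow> real) \<Rightarrow> real \<Rightarrow> real \<Rightarrow> real" where
  "mf f x y = x * f (y / x)"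

definition trace_c :: "nat \<Rightarrow> complex mat \<Rightarrow> complex" where
  "trace_c n M = (\<Sum>i<n. M $$ (i,i))"

definition density_pos :: "nat \<Rightarrow> complex mat \<Rightarrow> bool" where
  "density_pos n \<rho> \<longleftrightarrow> pos_def_mat n \<rho> \<and> trace_c n \<rho> = 1"

text \<open>m_f(L_rho,R_rho)^{-1}(X): in an eigenbasis of rho, divide entry X_ij by m_f(lambda_i,lambda_j).\<close>
definition mf_inv_apply :: "nat \<Rightarrow> (real \<Rightarrow> real) \<Rightarrow> complex mat \<Rightarrow> complex mat \<Rightarrow> complex mat" where
  "mf_inv_apply n f \<rho> X = (SOME Y. \<exists>U lam. herm_decomp n \<rho> U lam \<and>
      Y = U * mat n n (\<lambda>(i,j). (adj U * X * U) $$ (i,j) / complex_of_real (mf f (lam i) (lam j))) * adj U)"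

definition f_norm_sq :: "nat \<Rightarrow> (real \<Rightarrow> real) \<Rightarrow> complex mat \<Rightarrow> complex mat \<Rightarrow> real" where
  "f_norm_sq n f \<rho> X = Re (trace_c n (adj X * mf_inv_apply n f \<rho> X))"

definition f_information :: "nat \<Rightarrow> (real \<Rightarrow> real) \<Rightarrow> complex mat \<Rightarrow> complex mat \<Rightarrow> real" where
  "f_information n f \<rho> A = f0 f / 2 * f_norm_sq n f \<rho> (\<i> \<cdot>\<^sub>m (\<rho> * A - A * \<rho>))"

end

theory Submission
  imports Defs "Jordan_Normal_Form.Spectral_Radius"
begin

lemma mult_idx:
  assumes "A \<in> carrier_mat n m" "B \<in> carrier_mat m p" "i < n" "j < p"
  shows "(A * B) $$ (i,j) = (\<Sum>k<m. A $$ (i,k) * B $$ (k,j))"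
  using assms by (auto simp: scalar_prod_def lessThan_atLeast0 intro!: sum.cong)

lemma adj_dims[simp]: "dim_row (adj A) = dim_col A" "dim_col (adj A) = dim_row A"
  by (auto simp: adj_def)

lemma adj_carrier[simp]: "A \<in> carrier_mat m n \<Longrightarrow> adj A \<in> carrier_mat n m"
  by (auto simp: adj_def)

lemma adj_idx[simp]: "i < dim_col A \<Longrightarrow> j < dim_row A \<Longrightarrow> adj A $$ (i,j) = cnj (A $$ (j,i))"
  by (auto simp: adj_def)

lemma adj_adj[simp]: "adj (adj A) = A"
  by (rule eq_matI) (auto simp: adj_def)

lemma adj_mult:
  assumes "A \<in> carrier_mat m n" "B \<in> carrier_mat n p"
  shows "adj (A * B) = adj B * adj A"
proof (rule eq_matI)
  fix i j assume ij: "i < dim_row (adj B * adj A)" "j < dim_col (adj B * adj A)"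
  then have i: "i < p" and j: "j < m" using assms by auto
  have "adj (A * B) $$ (i,j) = cnj ((A*B) $$ (j,i))" using assms i j by auto
  also have "\<dots> = (\<Sum>k<n. cnj (A $$ (j,k)) * cnj (B $$ (k,i)))"
    using mult_idx[OF assms j i] by simp
  also have "\<dots> = (adj B * adj A) $$ (i,j)"
    using assms i j by (subst mult_idx[of _ p n _ m]) (auto intro!: sum.cong simp: mult.commute)
  finally show "adj (A * B) $$ (i,j) = (adj B * adj A) $$ (i,j)" .
qed (use assms in auto)

lemma adj_one[simp]: "adj (1\<^sub>m n) = 1\<^sub>m n"
  by (rule eq_matI) auto

lemma adj_rdiag[simp]: "adj (rdiag n d) = rdiag n d"
  by (rule eq_matI) (auto simp: rdiag_def)

lemma rdiag_carrier[simp]: "rdiag n d \<in> carrier_mat n n"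
  by (auto simp: rdiag_def)

lemma adj_minus: "A \<in> carrier_mat m n \<Longrightarrow> B \<in> carrier_mat m n \<Longrightarrow> adj (A - B) = adj A - adj B"
  by (rule eq_matI) auto

lemma adj_smult: "adj (c \<cdot>\<^sub>m A) = cnj c \<cdot>\<^sub>m adj A"
  by (rule eq_matI) auto

lemma unitary_right:
  assumes "unitary_mat n U" shows "U * adj U = 1\<^sub>m n"
  using assms mat_mult_left_right_inverse[of "adj U" n U] unfolding unitary_mat_def by auto

lemma unitary_mult:
  assumes "unitary_mat n U" "unitary_mat n V" shows "unitary_mat n (U * V)"
proof -
  have U: "U \<in> carrier_mat n n" and V: "V \<in> carrier_mat n n"
    and u: "adj U * U = 1\<^sub>m n" and v: "adj V * V = 1\<^sub>m n" using assms unfolding unitary_mat_def by auto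
  have "adj (U * V) * (U * V) = adj V * (adj U * (U * V))"
    unfolding adj_mult[OF U V] using U V
    by (intro assoc_mult_mat[of _ n n _ n _ n]) auto
  also have "adj U * (U * V) = (adj U * U) * V"
    using U V by (intro assoc_mult_mat[of _ n n _ n _ n, symmetric]) auto
  also have "adj V * ((adj U * U) * V) = 1\<^sub>m n" using u v V by simp
  finally show ?thesis using U V unfolding unitary_mat_def by auto
qed


lemma unitary_with_col0:
  fixes v :: "complex vec"
  assumes v: "v \<in> carrier_vec n" and v0: "v \<noteq> 0\<^sub>v n"
  shows "\<exists>U c. unitary_mat n U \<and> c \<noteq> 0 \<and> 0 < n \<and> (\<forall>k<n. U $$ (k,0) = c * v $ k)"
proof -
  interpret cof_vec_space n "TYPE(complex)" .
  define b where "b = basis_completion v"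
  from basis_completion[OF v v0, folded b_def]
  have dist_b: "distinct b" and indep: "\<not> lin_dep (set b)" and b: "set b \<subseteq> carrier_vec n"
    and len_b: "length b = n" by auto
  obtain vs where bv: "b = v # vs" unfolding b_def basis_completion_def Let_def by auto
  have n: "0 < n" using len_b bv by auto
  define ws where "ws = gram_schmidt n b"
  from gram_schmidt_result[OF b dist_b indep refl, folded ws_def]
  have wsc: "set ws \<subseteq> carrier_vec n" and orth: "corthogonal ws" and lws: "length ws = n"
    by (auto simp: len_b)
  have hd: "hd ws = v" using gram_schmidt_hd[OF v, of vs] unfolding ws_def bv .
  have ws0: "ws ! 0 = v" using hd n lws by (cases ws) auto
  define r where "r i = Re (ws!i \<bullet>c ws!i)" for i
  have wci: "ws ! i \<in> carrier_vec n" if "i < n" for i using wsc lws that by auto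
  have pos: "0 < r i \<and> ws!i \<bullet>c ws!i = complex_of_real (r i)" if i: "i < n" for i
  proof -
    have "ws!i \<bullet>c ws!i \<noteq> 0" using corthogonalD[OF orth, of i i] i lws by auto
    moreover have "ws!i \<bullet>c ws!i \<ge> 0" by (rule conjugate_square_ge_0_vec)
    ultimately have "ws!i \<bullet>c ws!i > 0" by auto
    then show ?thesis unfolding r_def by (auto simp: less_complex_def complex_eq_iff)
  qed
  have cs: "ws!j \<bullet>c ws!i = (\<Sum>k<n. ws!j $ k * cnj (ws!i $ k))" if "i < n" for i j
    using wci[OF that] by (auto simp: scalar_prod_def lessThan_atLeast0)
  define U where "U = mat n n (\<lambda>(k,i). ws!i $ k / complex_of_real (sqrt (r i)))"
  have U: "U \<in> carrier_mat n n" unfolding U_def by auto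
  have "adj U * U = 1\<^sub>m n"
  proof (rule eq_matI)
    fix i j assume "i < dim_row (1\<^sub>m n)" "j < dim_col (1\<^sub>m n)"
    then have i: "i < n" and j: "j < n" by auto
    have "(adj U * U) $$ (i,j) = (\<Sum>k<n. cnj (U $$ (k,i)) * U $$ (k,j))"
      using U i j by (subst mult_idx[of _ n n _ n]) auto
    also have "\<dots> = (\<Sum>k<n. ws!j $ k * cnj (ws!i $ k)) / (complex_of_real (sqrt (r i)) * complex_of_real (sqrt (r j)))"
      unfolding sum_divide_distrib using i j
      by (intro sum.cong) (auto simp: U_def)
    also have "\<dots> = (ws!j \<bullet>c ws!i) / (complex_of_real (sqrt (r i)) * complex_of_real (sqrt (r j)))"
      using cs[OF i] by simp
    also have "\<dots> = 1\<^sub>m n $$ (i,j)"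
    proof (cases "i = j")
      case True
      have "sqrt (r i) * sqrt (r i) = r i" using pos[OF i] by simp
      then have "complex_of_real (sqrt (r i)) * complex_of_real (sqrt (r i)) = complex_of_real (r i)"
        by (metis of_real_mult)
      then show ?thesis using True pos[OF i] i by simp
    next
      case False
      then have "ws!j \<bullet>c ws!i = 0" using corthogonalD[OF orth, of j i] i j lws by auto
      then show ?thesis using False i j by simp
    qed
    finally show "(adj U * U) $$ (i,j) = 1\<^sub>m n $$ (i,j)" .
  qed (use U in auto)
  then have "unitary_mat n U" using U unfolding unitary_mat_def by auto
  moreover have "1 / complex_of_real (sqrt (r 0)) \<noteq> 0" using pos[OF n] by simp
  moreover have "\<forall>k<n. U $$ (k,0) = 1 / complex_of_real (sqrt (r 0)) * v $ k"
    using n ws0 by (auto simp: U_def)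
  ultimately show ?thesis using n by blast
qed


lemma sq_mult_carrier: "A \<in> carrier_mat n n \<Longrightarrow> B \<in> carrier_mat n n \<Longrightarrow> A * B \<in> carrier_mat n n"
  by auto

lemma sq_assoc: "A \<in> carrier_mat n n \<Longrightarrow> B \<in> carrier_mat n n \<Longrightarrow> C \<in> carrier_mat n n \<Longrightarrow> A * B * C = A * (B * C)"
  by (rule assoc_mult_mat) auto

lemma mult_rdiag_idx:
  assumes "U \<in> carrier_mat m n" "i < m" "k < n"
  shows "(U * rdiag n d) $$ (i,k) = U $$ (i,k) * complex_of_real (d k)"
proof -
  have "(U * rdiag n d) $$ (i,k) = (\<Sum>l<n. U $$ (i,l) * rdiag n d $$ (l,k))"
    using assms by (intro mult_idx) auto
  also have "\<dots> = (\<Sum>l<n. if l = k then U $$ (i,k) * complex_of_real (d k) else 0)"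
    using assms by (intro sum.cong) (auto simp: rdiag_def)
  also have "\<dots> = U $$ (i,k) * complex_of_real (d k)" using assms by simp
  finally show ?thesis .
qed

lemma udu_idx:
  assumes "U \<in> carrier_mat m n" "i < m" "j < m"
  shows "(U * rdiag n d * adj U) $$ (i,j) = (\<Sum>k<n. U $$ (i,k) * complex_of_real (d k) * cnj (U $$ (j,k)))"
proof -
  have "(U * rdiag n d * adj U) $$ (i,j) = (\<Sum>k<n. (U * rdiag n d) $$ (i,k) * adj U $$ (k,j))"
    using assms by (intro mult_idx[of _ m n]) auto
  also have "\<dots> = (\<Sum>k<n. U $$ (i,k) * complex_of_real (d k) * cnj (U $$ (j,k)))"
    using assms by (intro sum.cong) (auto simp: mult_rdiag_idx)
  finally show ?thesis .
qed

lemma herm_conj: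
  assumes "hermitian_mat n B" "i < n" "j < n"
  shows "B $$ (i,j) = cnj (B $$ (j,i))"
proof -
  have Bc: "B \<in> carrier_mat n n" and aB: "adj B = B" using assms unfolding hermitian_mat_def by auto
  have "adj B $$ (i,j) = cnj (B $$ (j,i))" by (rule adj_idx) (use Bc assms in auto)
  then show ?thesis using aB by simp
qed

lemma hermitian_conj_unitary:
  assumes A: "hermitian_mat n A" and U: "U \<in> carrier_mat n n"
  shows "hermitian_mat n (adj U * A * U)"
proof -
  have Ac: "A \<in> carrier_mat n n" and aA: "adj A = A" using A unfolding hermitian_mat_def by auto
  have "adj (adj U * A * U) = adj U * adj (adj U * A)"
    using U Ac by (subst adj_mult[of _ n n _ n]) auto
  also have "adj (adj U * A) = adj A * U" using U Ac by (subst adj_mult[of _ n n _ n]) auto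
  also have "adj U * (adj A * U) = adj U * A * U"
    using U Ac aA by (subst assoc_mult_mat[of _ n n _ n _ n]) auto
  finally show ?thesis using U Ac unfolding hermitian_mat_def by auto
qed

lemma spectral:
  "hermitian_mat n A \<Longrightarrow> \<exists>U d. herm_decomp n A U d"
proof (induction n arbitrary: A)
  case 0
  then have A: "A \<in> carrier_mat 0 0" unfolding hermitian_mat_def by auto
  have "unitary_mat 0 (1\<^sub>m 0)" unfolding unitary_mat_def by auto
  moreover have "A = 1\<^sub>m 0 * rdiag 0 (\<lambda>_. 0) * adj (1\<^sub>m 0)"
    using A by (intro eq_matI) auto
  ultimately show ?case unfolding herm_decomp_def by blast
next
  case (Suc n)
  define m where "m = Suc n"
  have A: "A \<in> carrier_mat m m" and aA: "adj A = A" using Suc.prems unfolding hermitian_mat_def m_def by auto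
  obtain e where "e \<in> spectrum A" using spectrum_non_empty[OF A] unfolding m_def by auto
  then obtain v where ev: "eigenvector A v e" unfolding spectrum_def eigenvalue_def by auto
  then have v: "v \<in> carrier_vec m" and v0: "v \<noteq> 0\<^sub>v m" and Av: "A *\<^sub>v v = e \<cdot>\<^sub>v v"
    unfolding eigenvector_def using A by auto
  obtain U0 c where U0u: "unitary_mat m U0" and c0: "c \<noteq> 0"
    and U0c: "\<forall>k<m. U0 $$ (k,0) = c * v $ k"
    using unitary_with_col0[OF v v0] by auto
  have U0: "U0 \<in> carrier_mat m m" and U0i: "adj U0 * U0 = 1\<^sub>m m" using U0u unfolding unitary_mat_def by auto
  define B where "B = adj U0 * A * U0"
  have Bc: "B \<in> carrier_mat m m" unfolding B_def using U0 A by auto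
  have Bh: "hermitian_mat m B" unfolding B_def
    using hermitian_conj_unitary[OF Suc.prems[folded m_def] U0] .
  have AU: "(A * U0) $$ (k,0) = e * U0 $$ (k,0)" if k: "k < m" for k
  proof -
    have "(A * U0) $$ (k,0) = (\<Sum>l<m. A $$ (k,l) * U0 $$ (l,0))"
      using A U0 k by (intro mult_idx) (auto simp: m_def)
    also have "\<dots> = c * (\<Sum>l<m. A $$ (k,l) * v $ l)"
      using U0c by (auto simp: sum_distrib_left intro!: sum.cong)
    also have "(\<Sum>l<m. A $$ (k,l) * v $ l) = (A *\<^sub>v v) $ k"
      using A v k by (auto simp: scalar_prod_def lessThan_atLeast0 intro!: sum.cong)
    also have "\<dots> = e * v $ k" using Av v k by auto
    finally show ?thesis using U0c k by simp
  qed
  have Bcol: "B $$ (i,0) = (if i = 0 then e else 0)" if i: "i < m" for i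
  proof -
    have "B = adj U0 * (A * U0)" unfolding B_def using A U0 by (intro assoc_mult_mat) auto
    moreover have "(adj U0 * (A * U0)) $$ (i,0) = (\<Sum>k<m. adj U0 $$ (i,k) * (A * U0) $$ (k,0))"
      by (rule mult_idx[of _ m m _ m]) (use A U0 i in \<open>auto simp: m_def\<close>)
    ultimately have "B $$ (i,0) = (\<Sum>k<m. adj U0 $$ (i,k) * (A * U0) $$ (k,0))" by simp
    also have "\<dots> = e * (\<Sum>k<m. adj U0 $$ (i,k) * U0 $$ (k,0))"
      using AU by (auto simp: sum_distrib_left intro!: sum.cong)
    also have "(\<Sum>k<m. adj U0 $$ (i,k) * U0 $$ (k,0)) = (adj U0 * U0) $$ (i,0)"
      using U0 i by (intro mult_idx[symmetric]) (auto simp: m_def)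
    finally show ?thesis using U0i i by (auto simp: m_def)
  qed
  have Brow: "B $$ (0,j) = (if j = 0 then e else 0)" if j: "j < m" for j
    using herm_conj[OF Bh _ j, of 0] Bcol[OF j] j Bcol[of 0] by (auto simp: m_def)
  have ereal: "cnj e = e" using herm_conj[OF Bh, of 0 0] Bcol[of 0] by (auto simp: m_def)
  then have eR: "complex_of_real (Re e) = e" by (metis Reals_cnj_iff complex_is_Real_iff of_real_Re)
  define A' where "A' = mat n n (\<lambda>(i,j). B $$ (Suc i, Suc j))"
  have A'h: "hermitian_mat n A'"
    unfolding hermitian_mat_def
    by (auto simp: A'_def intro!: eq_matI herm_conj[OF Bh, symmetric] simp: m_def)
  obtain U' d' where dec: "herm_decomp n A' U' d'" using Suc.IH[OF A'h] by auto
  then have U': "U' \<in> carrier_mat n n" and U'i: "adj U' * U' = 1\<^sub>m n"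
    and A'eq: "A' = U' * rdiag n d' * adj U'"
    unfolding herm_decomp_def unitary_mat_def by auto
  define U1 where "U1 = mat m m (\<lambda>(i,j). if i = 0 \<and> j = 0 then 1 else if i = 0 \<or> j = 0 then 0 else U' $$ (i - 1, j - 1))"
  define d where "d i = (if i = 0 then Re e else d' (i - 1))" for i
  have U1c: "U1 \<in> carrier_mat m m" unfolding U1_def by auto
  have "adj U1 * U1 = 1\<^sub>m m"
  proof (rule eq_matI)
    fix i j assume "i < dim_row (1\<^sub>m m)" "j < dim_col (1\<^sub>m m)"
    then have i: "i < m" and j: "j < m" by auto
    have "(adj U1 * U1) $$ (i,j) = (\<Sum>k<m. cnj (U1 $$ (k,i)) * U1 $$ (k,j))"
      using U1c i j by (subst mult_idx[of _ m m _ m]) auto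
    also have "\<dots> = cnj (U1 $$ (0,i)) * U1 $$ (0,j) + (\<Sum>k<n. cnj (U1 $$ (Suc k,i)) * U1 $$ (Suc k,j))"
      unfolding m_def by (subst sum.lessThan_Suc_shift) simp
    also have "\<dots> = 1\<^sub>m m $$ (i,j)"
    proof (cases "i = 0 \<or> j = 0")
      case True
      then show ?thesis using i j by (auto simp: U1_def m_def)
    next
      case False
      then obtain i' j' where ii: "i = Suc i'" and jj: "j = Suc j'" by (metis not0_implies_Suc)
      then have i': "i' < n" and j': "j' < n" using i j by (auto simp: m_def)
      have "(\<Sum>k<n. cnj (U1 $$ (Suc k,i)) * U1 $$ (Suc k,j)) = (\<Sum>k<n. cnj (U' $$ (k,i')) * U' $$ (k,j'))"
        using i j ii jj by (intro sum.cong) (auto simp: U1_def m_def)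
      also have "\<dots> = (adj U' * U') $$ (i',j')"
        using U' i' j' by (subst mult_idx[of _ n n _ n]) auto
      finally show ?thesis using U'i i' j' ii jj i j by (auto simp: U1_def m_def)
    qed
    finally show "(adj U1 * U1) $$ (i,j) = 1\<^sub>m m $$ (i,j)" .
  qed (use U1c in auto)
  then have U1u: "unitary_mat m U1" using U1c unfolding unitary_mat_def by auto
  have Beq: "B = U1 * rdiag m d * adj U1"
  proof (rule eq_matI)
    fix i j assume "i < dim_row (U1 * rdiag m d * adj U1)" "j < dim_col (U1 * rdiag m d * adj U1)"
    then have i: "i < m" and j: "j < m" using U1c by auto
    have "(U1 * rdiag m d * adj U1) $$ (i,j) = (\<Sum>k<m. U1 $$ (i,k) * complex_of_real (d k) * cnj (U1 $$ (j,k)))"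
      using udu_idx[OF U1c i j] .
    also have "\<dots> = U1 $$ (i,0) * complex_of_real (d 0) * cnj (U1 $$ (j,0)) + (\<Sum>k<n. U1 $$ (i,Suc k) * complex_of_real (d (Suc k)) * cnj (U1 $$ (j,Suc k)))"
      unfolding m_def by (subst sum.lessThan_Suc_shift) simp
    also have "\<dots> = B $$ (i,j)"
    proof (cases "i = 0 \<or> j = 0")
      case True
      then show ?thesis using i j Bcol Brow eR by (auto simp: U1_def m_def d_def)
    next
      case False
      then obtain i' j' where ii: "i = Suc i'" and jj: "j = Suc j'" by (metis not0_implies_Suc)
      then have i': "i' < n" and j': "j' < n" using i j by (auto simp: m_def)
      have "(\<Sum>k<n. U1 $$ (i,Suc k) * complex_of_real (d (Suc k)) * cnj (U1 $$ (j,Suc k)))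
          = (\<Sum>k<n. U' $$ (i',k) * complex_of_real (d' k) * cnj (U' $$ (j',k)))"
        using i j ii jj by (intro sum.cong) (auto simp: U1_def m_def d_def)
      also have "\<dots> = A' $$ (i',j')" using udu_idx[OF U' i' j'] A'eq by simp
      finally show ?thesis using i' j' ii jj i j by (auto simp: U1_def m_def A'_def)
    qed
    finally show "B $$ (i,j) = (U1 * rdiag m d * adj U1) $$ (i,j)" by simp
  qed (use Bc U1c in auto)
  have U0r: "U0 * adj U0 = 1\<^sub>m m" using unitary_right[OF U0u] .
  have "A = (U0 * adj U0) * A * (U0 * adj U0)" using A U0r by simp
  also have "\<dots> = U0 * B * adj U0" unfolding B_def using A U0 adj_carrier[OF U0]
    by (simp add: sq_assoc[of _ m] sq_mult_carrier)
  also have "\<dots> = (U0 * U1) * rdiag m d * adj (U0 * U1)"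
    unfolding Beq adj_mult[OF U0 U1c] using U0 U1c adj_carrier[OF U0] adj_carrier[OF U1c]
    by (simp add: sq_assoc[of _ m] sq_mult_carrier)
  finally show ?case unfolding herm_decomp_def m_def[symmetric]
    using unitary_mult[OF U0u U1u] by blast
qed


lemma rdiag_mult_idx:
  assumes "W \<in> carrier_mat n m" "i < n" "k < m"
  shows "(rdiag n d * W) $$ (i,k) = complex_of_real (d i) * W $$ (i,k)"
proof -
  have "(rdiag n d * W) $$ (i,k) = (\<Sum>l<n. rdiag n d $$ (i,l) * W $$ (l,k))"
    using assms by (intro mult_idx) auto
  also have "\<dots> = (\<Sum>l<n. if l = i then complex_of_real (d i) * W $$ (i,k) else 0)"
    using assms by (intro sum.cong) (auto simp: rdiag_def)
  also have "\<dots> = complex_of_real (d i) * W $$ (i,k)" using assms by simp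
  finally show ?thesis .
qed

definition Ymat :: "nat \<Rightarrow> complex mat \<Rightarrow> (nat \<Rightarrow> real) \<Rightarrow> complex mat \<Rightarrow> (real \<Rightarrow> real \<Rightarrow> real) \<Rightarrow> complex mat" where
  "Ymat n U l X K = U * mat n n (\<lambda>(i,j). (adj U * X * U) $$ (i,j) / complex_of_real (K (l i) (l j))) * adj U"

lemma Ymat_unique:
  assumes d1: "herm_decomp n \<rho> U1 l1" and d2: "herm_decomp n \<rho> U2 l2" and X: "X \<in> carrier_mat n n"
  shows "Ymat n U1 l1 X K = Ymat n U2 l2 X K"
proof -
  have U1: "U1 \<in> carrier_mat n n" and U1i: "adj U1 * U1 = 1\<^sub>m n" and r1: "\<rho> = U1 * rdiag n l1 * adj U1"
    using d1 unfolding herm_decomp_def unitary_mat_def by auto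
  have U2: "U2 \<in> carrier_mat n n" and U2i: "adj U2 * U2 = 1\<^sub>m n" and r2: "\<rho> = U2 * rdiag n l2 * adj U2"
    using d2 unfolding herm_decomp_def unitary_mat_def by auto
  have U1r: "U1 * adj U1 = 1\<^sub>m n" using unitary_right d1 unfolding herm_decomp_def by auto
  have U2r: "U2 * adj U2 = 1\<^sub>m n" using unitary_right d2 unfolding herm_decomp_def by auto
  note cs = U1 U2 adj_carrier[OF U1] adj_carrier[OF U2] X rdiag_carrier
  define W where "W = adj U1 * U2"
  have Wc: "W \<in> carrier_mat n n" unfolding W_def using cs by auto
  have "rdiag n l1 * W = (adj U1 * U1) * rdiag n l1 * W" using U1i left_mult_one_mat[of "rdiag n l1" n n] by simp
  also have "\<dots> = adj U1 * \<rho> * U2" unfolding r1 W_def using cs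
    by (simp add: sq_assoc[of _ n] sq_mult_carrier)
  also have "\<dots> = adj U1 * U2 * rdiag n l2 * (adj U2 * U2)" unfolding r2 using cs
    by (simp add: sq_assoc[of _ n] sq_mult_carrier)
  also have "\<dots> = W * rdiag n l2" unfolding U2i W_def using cs by (simp add: sq_mult_carrier right_mult_one_mat[of _ n n])
  finally have DW: "rdiag n l1 * W = W * rdiag n l2" .
  have Wz: "l1 i = l2 k" if "W $$ (i,k) \<noteq> 0" "i < n" "k < n" for i k
  proof -
    have "complex_of_real (l1 i) * W $$ (i,k) = W $$ (i,k) * complex_of_real (l2 k)"
      using DW rdiag_mult_idx[OF Wc that(2,3)] mult_rdiag_idx[OF Wc that(2,3)] by metis
    then show ?thesis using that(1) by (simp add: mult.commute)
  qed
  define C1 where "C1 = adj U1 * X * U1"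
  define C2 where "C2 = adj U2 * X * U2"
  have C1c: "C1 \<in> carrier_mat n n" and C2c: "C2 \<in> carrier_mat n n" unfolding C1_def C2_def using cs by auto
  have "C1 * W = adj U1 * X * (U1 * adj U1) * U2" unfolding C1_def W_def using cs
    by (simp add: sq_assoc[of _ n] sq_mult_carrier)
  also have "\<dots> = adj U1 * X * U2" unfolding U1r using cs
    by (simp add: sq_mult_carrier right_mult_one_mat[of _ n n])
  also have "\<dots> = adj U1 * (U2 * adj U2) * X * U2" unfolding U2r using cs
    by (simp add: sq_mult_carrier right_mult_one_mat[of _ n n])
  also have "\<dots> = W * C2" unfolding C2_def W_def using cs
    by (simp add: sq_assoc[of _ n] sq_mult_carrier)
  finally have CW: "C1 * W = W * C2" .
  define M1 where "M1 = mat n n (\<lambda>(i,j). C1 $$ (i,j) / complex_of_real (K (l1 i) (l1 j)))"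
  define M2 where "M2 = mat n n (\<lambda>(i,j). C2 $$ (i,j) / complex_of_real (K (l2 i) (l2 j)))"
  have M1c: "M1 \<in> carrier_mat n n" and M2c: "M2 \<in> carrier_mat n n" unfolding M1_def M2_def by auto
  have MW: "M1 * W = W * M2"
  proof (rule eq_matI)
    fix i k assume "i < dim_row (W * M2)" "k < dim_col (W * M2)"
    then have i: "i < n" and k: "k < n" using Wc M2c by auto
    have "(M1 * W) $$ (i,k) = (\<Sum>j<n. M1 $$ (i,j) * W $$ (j,k))" using M1c Wc i k by (intro mult_idx) auto
    also have "\<dots> = (\<Sum>j<n. C1 $$ (i,j) * W $$ (j,k)) / complex_of_real (K (l1 i) (l2 k))"
      unfolding sum_divide_distrib
    proof (intro sum.cong refl)
      fix j assume j: "j \<in> {..<n}"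
      show "M1 $$ (i,j) * W $$ (j,k) = C1 $$ (i,j) * W $$ (j,k) / complex_of_real (K (l1 i) (l2 k))"
        using Wz[of j k] i j k by (cases "W $$ (j,k) = 0") (auto simp: M1_def)
    qed
    also have "(\<Sum>j<n. C1 $$ (i,j) * W $$ (j,k)) = (C1 * W) $$ (i,k)" using C1c Wc i k by (intro mult_idx[symmetric]) auto
    also have "\<dots> = (W * C2) $$ (i,k)" using CW by simp
    also have "\<dots> = (\<Sum>j<n. W $$ (i,j) * C2 $$ (j,k))" using C2c Wc i k by (intro mult_idx) auto
    also have "\<dots> / complex_of_real (K (l1 i) (l2 k)) = (\<Sum>j<n. W $$ (i,j) * M2 $$ (j,k))"
      unfolding sum_divide_distrib
    proof (intro sum.cong refl)
      fix j assume j: "j \<in> {..<n}"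
      show "W $$ (i,j) * C2 $$ (j,k) / complex_of_real (K (l1 i) (l2 k)) = W $$ (i,j) * M2 $$ (j,k)"
        using Wz[of i j] i j k by (cases "W $$ (i,j) = 0") (auto simp: M2_def)
    qed
    also have "\<dots> = (W * M2) $$ (i,k)" using M2c Wc i k by (intro mult_idx[symmetric]) auto
    finally show "(M1 * W) $$ (i,k) = (W * M2) $$ (i,k)" .
  qed (use M1c Wc M2c in auto)
  have "Ymat n U1 l1 X K = U1 * M1 * adj U1" unfolding Ymat_def M1_def C1_def ..
  also have "\<dots> = U1 * M1 * (W * adj U2)" unfolding W_def using cs U2r
    by (simp add: sq_assoc[of _ n] sq_mult_carrier)
  also have "\<dots> = U1 * (M1 * W) * adj U2" using cs M1c Wc by (simp add: sq_assoc[of _ n] sq_mult_carrier)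
  also have "\<dots> = (U1 * adj U1) * U2 * M2 * adj U2" unfolding MW unfolding W_def using cs M2c
    by (simp add: sq_assoc[of _ n] sq_mult_carrier)
  also have "\<dots> = Ymat n U2 l2 X K" unfolding U1r Ymat_def M2_def C2_def using cs by simp
  finally show ?thesis .
qed


lemma mf_inv_apply_eq:
  assumes d: "herm_decomp n \<rho> U l" and X: "X \<in> carrier_mat n n"
  shows "mf_inv_apply n f \<rho> X = Ymat n U l X (mf f)"
proof -
  let ?P = "\<lambda>Y. \<exists>U lam. herm_decomp n \<rho> U lam \<and> Y = Ymat n U lam X (mf f)"
  have eq: "mf_inv_apply n f \<rho> X = (SOME Y. ?P Y)" unfolding mf_inv_apply_def Ymat_def ..
  have "?P (Ymat n U l X (mf f))" using d by blast
  then have "?P (SOME Y. ?P Y)" by (rule someI)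
  then obtain U' l' where d': "herm_decomp n \<rho> U' l'" and "(SOME Y. ?P Y) = Ymat n U' l' X (mf f)" by blast
  then show ?thesis using eq Ymat_unique[OF d' d X] by simp
qed

lemma trace_c_comm:
  assumes "P \<in> carrier_mat n n" "Q \<in> carrier_mat n n"
  shows "trace_c n (P * Q) = trace_c n (Q * P)"
proof -
  have "trace_c n (P * Q) = (\<Sum>i<n. \<Sum>k<n. P $$ (i,k) * Q $$ (k,i))"
    unfolding trace_c_def using assms by (intro sum.cong refl mult_idx) auto
  also have "\<dots> = (\<Sum>k<n. \<Sum>i<n. Q $$ (k,i) * P $$ (i,k))"
    by (subst sum.swap) (simp add: mult.commute)
  also have "\<dots> = trace_c n (Q * P)"
    unfolding trace_c_def using assms by (intro sum.cong refl mult_idx[symmetric]) auto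
  finally show ?thesis .
qed

lemma norm_trace:
  assumes d: "herm_decomp n \<rho> U l" and X: "X \<in> carrier_mat n n"
  shows "Re (trace_c n (adj X * Ymat n U l X K)) =
    (\<Sum>i<n. \<Sum>k<n. (cmod ((adj U * X * U) $$ (k,i)))^2 / K (l k) (l i))"
proof -
  have U: "U \<in> carrier_mat n n" using d unfolding herm_decomp_def unitary_mat_def by auto
  define C where "C = adj U * X * U"
  define M where "M = mat n n (\<lambda>(i,j). C $$ (i,j) / complex_of_real (K (l i) (l j)))"
  have Cc: "C \<in> carrier_mat n n" unfolding C_def using U X by auto
  have Mc: "M \<in> carrier_mat n n" unfolding M_def by auto
  note cs = U X adj_carrier[OF U] adj_carrier[OF X] Mc
  define P where "P = adj X * U * M"
  have Pc: "P \<in> carrier_mat n n" unfolding P_def using cs by auto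
  have "adj X * Ymat n U l X K = P * adj U"
    unfolding Ymat_def M_def C_def P_def using cs by (simp add: sq_assoc[of _ n] sq_mult_carrier)
  then have "trace_c n (adj X * Ymat n U l X K) = trace_c n (adj U * P)"
    using trace_c_comm[OF Pc adj_carrier[OF U]] by simp
  also have "adj U * P = adj C * M"
    unfolding C_def P_def using cs
    by (simp add: adj_mult[of _ n n _ n] sq_mult_carrier sq_assoc[of _ n])
  also have "trace_c n (adj C * M) = (\<Sum>i<n. \<Sum>k<n. cnj (C $$ (k,i)) * C $$ (k,i) / complex_of_real (K (l k) (l i)))"
    unfolding trace_c_def
  proof (intro sum.cong refl)
    fix i assume i: "i \<in> {..<n}"
    have "(adj C * M) $$ (i,i) = (\<Sum>k<n. adj C $$ (i,k) * M $$ (k,i))"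
      by (rule mult_idx[of _ n n _ n]) (use Cc Mc i in auto)
    also have "\<dots> = (\<Sum>k<n. cnj (C $$ (k,i)) * C $$ (k,i) / complex_of_real (K (l k) (l i)))"
      using Cc i by (intro sum.cong refl) (auto simp: M_def)
    finally show "(adj C * M) $$ (i,i) = (\<Sum>k<n. cnj (C $$ (k,i)) * C $$ (k,i) / complex_of_real (K (l k) (l i)))" .
  qed
  finally have "Re (trace_c n (adj X * Ymat n U l X K)) =
     (\<Sum>i<n. \<Sum>k<n. Re (cnj (C $$ (k,i)) * C $$ (k,i) / complex_of_real (K (l k) (l i))))"
    by simp
  also have "\<dots> = (\<Sum>i<n. \<Sum>k<n. (cmod (C $$ (k,i)))^2 / K (l k) (l i))"
  proof (intro sum.cong refl)
    fix i k
    have "cnj (C $$ (k,i)) * C $$ (k,i) = complex_of_real ((cmod (C $$ (k,i)))^2)"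
      using complex_norm_square[of "C $$ (k,i)"] by (simp add: mult.commute)
    then show "Re (cnj (C $$ (k,i)) * C $$ (k,i) / complex_of_real (K (l k) (l i))) = (cmod (C $$ (k,i)))^2 / K (l k) (l i)"
      by (simp add: of_real_divide[symmetric] del: of_real_divide)
  qed
  finally show ?thesis unfolding C_def .
qed


lemma comm_entry:
  assumes d: "herm_decomp n \<rho> U l" and A: "A \<in> carrier_mat n n" and k: "k < n" and i: "i < n"
  shows "(adj U * (\<i> \<cdot>\<^sub>m (\<rho> * A - A * \<rho>)) * U) $$ (k,i)
        = \<i> * complex_of_real (l k - l i) * (adj U * A * U) $$ (k,i)"
proof -
  have U: "U \<in> carrier_mat n n" and Ui: "adj U * U = 1\<^sub>m n" and r: "\<rho> = U * rdiag n l * adj U"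
    using d unfolding herm_decomp_def unitary_mat_def by auto
  have rc: "\<rho> \<in> carrier_mat n n" unfolding r using U by (simp add: sq_mult_carrier)
  note cs = U A adj_carrier[OF U] rc rdiag_carrier
  define G where "G = adj U * A * U"
  have Gc: "G \<in> carrier_mat n n" unfolding G_def using cs by auto
  have e1: "adj U * (\<rho> * A) * U = rdiag n l * G"
  proof -
    have "adj U * (\<rho> * A) * U = (adj U * U) * rdiag n l * G"
      unfolding r G_def using cs by (simp add: sq_assoc[of _ n] sq_mult_carrier)
    then show ?thesis using Ui left_mult_one_mat[of "rdiag n l" n n] by simp
  qed
  have e2: "adj U * (A * \<rho>) * U = G * rdiag n l"
  proof -
    have "adj U * (A * \<rho>) * U = G * rdiag n l * (adj U * U)"
      unfolding r G_def using cs by (simp add: sq_assoc[of _ n] sq_mult_carrier)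
    then show ?thesis using Ui right_mult_one_mat[of "G * rdiag n l" n n] Gc by simp
  qed
  have "adj U * (\<i> \<cdot>\<^sub>m (\<rho> * A - A * \<rho>)) * U = \<i> \<cdot>\<^sub>m (adj U * (\<rho> * A - A * \<rho>) * U)"
  proof -
    have Zc: "\<rho> * A - A * \<rho> \<in> carrier_mat n n" using cs by auto
    show ?thesis
      unfolding mult_smult_distrib[OF adj_carrier[OF U] Zc]
      by (rule mult_smult_assoc_mat[of _ n n _ n]) (use cs Zc in \<open>simp_all add: sq_mult_carrier\<close>)
  qed
  also have "adj U * (\<rho> * A - A * \<rho>) * U = adj U * (\<rho> * A) * U - adj U * (A * \<rho>) * U"
  proof -
    have c1: "\<rho> * A \<in> carrier_mat n n" "A * \<rho> \<in> carrier_mat n n" using cs by (simp_all add: sq_mult_carrier)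
    have c2: "adj U * (\<rho> * A) \<in> carrier_mat n n" "adj U * (A * \<rho>) \<in> carrier_mat n n"
      using cs c1 by (simp_all add: sq_mult_carrier)
    show ?thesis unfolding mult_minus_distrib_mat[OF adj_carrier[OF U] c1]
      by (rule minus_mult_distrib_mat[OF c2 U])
  qed
  also have "\<dots> = rdiag n l * G - G * rdiag n l" using e1 e2 by simp
  finally have eqm: "adj U * (\<i> \<cdot>\<^sub>m (\<rho> * A - A * \<rho>)) * U = \<i> \<cdot>\<^sub>m (rdiag n l * G - G * rdiag n l)" .
  have "(adj U * (\<i> \<cdot>\<^sub>m (\<rho> * A - A * \<rho>)) * U) $$ (k,i)
      = \<i> * (complex_of_real (l k) * G $$ (k,i) - G $$ (k,i) * complex_of_real (l i))"
  proof -
    have d1: "rdiag n l * G \<in> carrier_mat n n" "G * rdiag n l \<in> carrier_mat n n" using Gc by (simp_all add: sq_mult_carrier)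
    have "(\<i> \<cdot>\<^sub>m (rdiag n l * G - G * rdiag n l)) $$ (k,i) = \<i> * ((rdiag n l * G - G * rdiag n l) $$ (k,i))"
      by (rule index_smult_mat) (use d1 k i in auto)
    also have "(rdiag n l * G - G * rdiag n l) $$ (k,i) = (rdiag n l * G) $$ (k,i) - (G * rdiag n l) $$ (k,i)"
      by (rule index_minus_mat) (use d1 k i in auto)
    finally show ?thesis using eqm
      rdiag_mult_idx[OF Gc k i] mult_rdiag_idx[OF Gc k i] by simp
  qed
  then show ?thesis unfolding G_def by (simp add: algebra_simps)
qed

lemma eig_pos:
  assumes p: "pos_def_mat n \<rho>" and d: "herm_decomp n \<rho> U l" and k: "k < n"
  shows "l k > 0"
proof -
  have U: "U \<in> carrier_mat n n" and Ui: "adj U * U = 1\<^sub>m n" and r: "\<rho> = U * rdiag n l * adj U"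
    using d unfolding herm_decomp_def unitary_mat_def by auto
  have rc: "\<rho> \<in> carrier_mat n n" unfolding r using U by (simp add: sq_mult_carrier)
  note cs = U adj_carrier[OF U] rc rdiag_carrier
  define v where "v = vec n (\<lambda>a. U $$ (a,k))"
  have vc: "v \<in> carrier_vec n" unfolding v_def by auto
  have "adj U * \<rho> * U = (adj U * U) * rdiag n l * (adj U * U)"
    unfolding r using cs by (simp add: sq_assoc[of _ n] sq_mult_carrier)
  then have aru: "adj U * \<rho> * U = rdiag n l" using Ui
    by (simp add: left_mult_one_mat[of "rdiag n l" n n] right_mult_one_mat[of "rdiag n l" n n])
  have "quad_form n \<rho> v = (\<Sum>b<n. (\<Sum>a<n. cnj (U $$ (a,k)) * \<rho> $$ (a,b)) * U $$ (b,k))"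
    unfolding quad_form_def v_def using k
    by (subst sum.swap) (auto simp: sum_distrib_right intro!: sum.cong)
  also have "\<dots> = (\<Sum>b<n. (adj U * \<rho>) $$ (k,b) * U $$ (b,k))"
  proof (intro sum.cong refl)
    fix b assume b: "b \<in> {..<n}"
    have "(adj U * \<rho>) $$ (k,b) = (\<Sum>a<n. adj U $$ (k,a) * \<rho> $$ (a,b))"
      by (rule mult_idx[of _ n n _ n]) (use cs k b in auto)
    then show "(\<Sum>a<n. cnj (U $$ (a,k)) * \<rho> $$ (a,b)) * U $$ (b,k) = (adj U * \<rho>) $$ (k,b) * U $$ (b,k)"
      using cs k by simp
  qed
  also have "\<dots> = (adj U * \<rho> * U) $$ (k,k)"
    by (rule mult_idx[symmetric, of _ n n _ n]) (use cs k in auto)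
  also have "\<dots> = complex_of_real (l k)" using aru k by (simp add: rdiag_def)
  finally have q: "quad_form n \<rho> v = complex_of_real (l k)" .
  have "v \<noteq> 0\<^sub>v n"
  proof
    assume v0: "v = 0\<^sub>v n"
    have "(adj U * U) $$ (k,k) = (\<Sum>a<n. adj U $$ (k,a) * U $$ (a,k))"
      by (rule mult_idx[of _ n n _ n]) (use cs k in auto)
    also have "\<dots> = (\<Sum>a<n. cnj (U $$ (a,k)) * U $$ (a,k))"
      using cs k by (intro sum.cong refl) auto
    also have "\<dots> = 0"
    proof (intro sum.neutral ballI)
      fix a assume "a \<in> {..<n}"
      then have "v $ a = 0" using v0 by auto
      then show "cnj (U $$ (a,k)) * U $$ (a,k) = 0" using \<open>a \<in> {..<n}\<close> by (simp add: v_def)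
    qed
    finally show False using Ui k by simp
  qed
  then have "Re (quad_form n \<rho> v) > 0" using p vc unfolding pos_def_mat_def by auto
  then show ?thesis using q by simp
qed

lemma term_le:
  fixes a b N :: real
  assumes a: "a > 0" and N: "N \<ge> 0" and le: "tilde g (b / a) \<le> tilde f (b / a)"
    and fnz: "f (b / a) \<noteq> 0" and gnz: "g (b / a) \<noteq> 0"
  shows "f0 f / 2 * ((a - b)^2 * N / mf f a b) \<le> f0 g / 2 * ((a - b)^2 * N / mf g a b)"
proof -
  have key: "F0 / 2 * ((a - b)^2 * N / (a * fx)) = N * a / 2 * (b/a + 1) - N * a * (((b/a + 1) - (b/a - 1)^2 * (F0 / fx)) / 2)"
    if "fx \<noteq> 0" for F0 fx :: real
  proof -
    have "(a - b)^2 = a^2 * (b/a - 1)^2" using a by (simp add: power2_eq_square field_simps)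
    then show ?thesis using that a by (simp add: power2_eq_square field_simps)
  qed
  have "f0 f / 2 * ((a - b)^2 * N / mf f a b) = N * a / 2 * (b/a + 1) - N * a * tilde f (b / a)"
    unfolding mf_def key[OF fnz] tilde_def by simp
  moreover have "f0 g / 2 * ((a - b)^2 * N / mf g a b) = N * a / 2 * (b/a + 1) - N * a * tilde g (b / a)"
    unfolding mf_def key[OF gnz] tilde_def by simp
  moreover have "N * a * tilde g (b / a) \<le> N * a * tilde f (b / a)"
    using le N a by (intro mult_left_mono) auto
  ultimately show ?thesis by linarith
qed


lemma info_formula:
  assumes d: "herm_decomp n \<rho> U l" and A: "A \<in> carrier_mat n n"
  shows "f_information n h \<rho> A =
    (\<Sum>i<n. \<Sum>k<n. f0 h / 2 * ((l k - l i)^2 * (cmod ((adj U * A * U) $$ (k,i)))^2 / mf h (l k) (l i)))"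
proof -
  have U: "U \<in> carrier_mat n n" and r: "\<rho> = U * rdiag n l * adj U"
    using d unfolding herm_decomp_def unitary_mat_def by auto
  have rc: "\<rho> \<in> carrier_mat n n" unfolding r using U by (simp add: sq_mult_carrier)
  define X where "X = \<i> \<cdot>\<^sub>m (\<rho> * A - A * \<rho>)"
  have Xc: "X \<in> carrier_mat n n" unfolding X_def using rc A by (intro smult_carrier_mat minus_carrier_mat sq_mult_carrier)
  have "f_information n h \<rho> A = f0 h / 2 * Re (trace_c n (adj X * Ymat n U l X (mf h)))"
    unfolding f_information_def f_norm_sq_def X_def[symmetric] mf_inv_apply_eq[OF d Xc] ..
  also have "\<dots> = f0 h / 2 * (\<Sum>i<n. \<Sum>k<n. (cmod ((adj U * X * U) $$ (k,i)))^2 / mf h (l k) (l i))"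
    unfolding norm_trace[OF d Xc] ..
  also have "\<dots> = (\<Sum>i<n. \<Sum>k<n. f0 h / 2 * ((l k - l i)^2 * (cmod ((adj U * A * U) $$ (k,i)))^2 / mf h (l k) (l i)))"
    unfolding sum_distrib_left
  proof (intro sum.cong refl)
    fix i k assume i: "i \<in> {..<n}" and k: "k \<in> {..<n}"
    have "(adj U * X * U) $$ (k,i) = \<i> * complex_of_real (l k - l i) * (adj U * A * U) $$ (k,i)"
      unfolding X_def using comm_entry[OF d A] i k by auto
    then have "(cmod ((adj U * X * U) $$ (k,i)))^2 = (l k - l i)^2 * (cmod ((adj U * A * U) $$ (k,i)))^2"
      by (simp add: norm_mult power_mult_distrib del: of_real_diff)
    then show "f0 h / 2 * ((cmod ((adj U * X * U) $$ (k,i)))^2 / mf h (l k) (l i)) =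
       f0 h / 2 * ((l k - l i)^2 * (cmod ((adj U * A * U) $$ (k,i)))^2 / mf h (l k) (l i))" by simp
  qed
  finally show ?thesis .
qed

theorem mainTheorem4:
  fixes f g :: "real \<Rightarrow> real" and n :: nat and \<rho> A :: "complex mat"
  assumes "F_op_r f" and "F_op_r g"
    and "\<forall>x>0. tilde g x \<le> tilde f x"
    and "density_pos n \<rho>"
    and "hermitian_mat n A"
  shows "f_information n f \<rho> A \<le> f_information n g \<rho> A"
proof -
  have fpos: "\<forall>x>0. f x > 0" and gpos: "\<forall>x>0. g x > 0"
    using assms(1,2) unfolding F_op_r_def F_op_def by auto
  have p: "pos_def_mat n \<rho>" using assms(4) unfolding density_pos_def by auto
  then have "hermitian_mat n \<rho>" unfolding pos_def_mat_def by auto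
  then obtain U l where d: "herm_decomp n \<rho> U l" using spectral by blast
  have A: "A \<in> carrier_mat n n" using assms(5) unfolding hermitian_mat_def by auto
  have lpos: "\<And>k. k < n \<Longrightarrow> l k > 0" using eig_pos[OF p d] by blast
  show ?thesis
    unfolding info_formula[OF d A]
  proof (intro sum_mono)
    fix i k assume i: "i \<in> {..<n}" and k: "k \<in> {..<n}"
    have a: "l k > 0" and b: "l i > 0" using lpos i k by auto
    then have x: "l i / l k > 0" by simp
    show "f0 f / 2 * ((l k - l i)^2 * (cmod ((adj U * A * U) $$ (k,i)))^2 / mf f (l k) (l i))
        \<le> f0 g / 2 * ((l k - l i)^2 * (cmod ((adj U * A * U) $$ (k,i)))^2 / mf g (l k) (l i))"
      by (rule term_le[OF a]) (use assms(3) x fpos gpos in auto)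
  qed
qed


end
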